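(* In the setting of an iteration $t$ of the NSGA-II optimizing \textsc{OneMinMax}, with crowding distances computed with respect to $R_t$, let $v_1^{\min},v_1^{\max}$, $V$, $V^+_{\mathrm{in}}$, $V^-_{\mathrm{in}}$ be as defined below and assume $v_1^{\max}>v_1^{\min}$. Then for every $(v_1,v_2)\in V^+_{\mathrm{in}}\cap V^-_{\mathrm{in}}$, there are at most two individuals $x\in R_t$ with $f(x)=(v_1,v_2)$ and $\mathrm{cDis}(x)\ge\frac{2}{v_1^{\max}-v_1^{\min}}$ (regardless of how ties are broken in the sorting steps).
   Context: Search space $\{0,1\}^n$; objective $f=(f_1,f_2)$, both maximized. Populations are multisets of bit strings. Crowding distance of the individuals of a set $S$ (computed with respect to $S$): start with $\mathrm{cDis}(x)=0$ for all $x\in S$; for each $i\in\{1,2\}$, sort $S$ in ascending $f_i$-value as $S_{i.1},\dots,S_{i.|S|}$ (ties broken arbitrarily), set $\mathrm{cDis}(S_{i.1})=\mathrm{cDis}(S_{i.|S|})=+\infty$, and for $2\le j\le |S|-1$ add $\frac{f_i(S_{i.j+1})-f_i(S_{i.j-1})}{f_i(S_{i.|S|})-f_i(S_{i.1})}$ to $\mathrm{cDis}(S_{i.j})$. In the NSGA-II, $R_t=P_t\cup Q_t$ is the multiset union of the parent population $P_t$ and offspring population $Q_t$ of iteration $t$, each of size $N$. \textsc{OneMinMax}: $f(x)=(n-\sum_i x_i,\ \sum_i x_i)$. Notation: $v_1^{\min}=\min\{f_1(x):x\in R_t\}$, $v_1^{\max}=\max\{f_1(x):x\in R_t\}$, $V=f(R_t)=\{f(x):x\in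 R_t\}$, $V^+_{\mathrm{in}}=\{(v_1,v_2)\in V:\exists y\in R_t,\ f(y)=(v_1+1,v_2-1)\}$, $V^-_{\mathrm{in}}=\{(v_1,v_2)\in V:\exists y\in R_t,\ f(y)=(v_1-1,v_2+1)\}$. *)

theory Defs
  imports Complex_Main "HOL-Library.Extended_Real"
begin

text \<open>Bit strings are boolean lists of length n. OneMinMax, with values in int
  so that v1+1, v2-1 are unproblematic.\<close>
definition omm :: "nat \<Rightarrow> bool list \<Rightarrow> int \<times> int" where
  "omm n x = (int n - int (count_list x True), int (count_list x True))"

text \<open>A multiset S of individuals is represented by a list; individuals are
  identified by their index in the list.\<close>
definition sorted_perm :: "('a \<Rightarrow> real) \<Rightarrow> 'a list \<Rightarrow> (nat \<Rightarrow> nat) \<Rightarrow> bool" where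
  "sorted_perm g S \<sigma> \<longleftrightarrow>
     bij_betw \<sigma> {..<length S} {..<length S} \<and>
     (\<forall>j k. j \<le> k \<and> k < length S \<longrightarrow> g (S ! \<sigma> j) \<le> g (S ! \<sigma> k))"

definition cdis_obj :: "('a \<Rightarrow> real) \<Rightarrow> 'a list \<Rightarrow> (nat \<Rightarrow> nat) \<Rightarrow> nat \<Rightarrow> ereal" where
  "cdis_obj g S \<sigma> x =
     (if \<sigma> 0 = x \<or> \<sigma> (length S - 1) = x then \<infinity>
      else ereal (\<Sum>j\<in>{1..<length S - 1}.
             if \<sigma> j = x then
               (g (S ! \<sigma> (Suc j)) - g (S ! \<sigma> (j - 1))) /
               (g (S ! \<sigma> (length S - 1)) - g (S ! \<sigma> 0))
             else 0))"

definition cDis :: "('a \<Rightarrow> real) \<Rightarrow> ('a \<Rightarrow> real) \<Rightarrow> 'a list \<Rightarrow> (nat \<Rightarrow> nat) \<Rightarrow> (nat \<Rightarrow> nat) \<Rightarrow> nat \<Rightarrow> ereal" where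
  "cDis g1 g2 S \<sigma>1 \<sigma>2 x = cdis_obj g1 S \<sigma>1 x + cdis_obj g2 S \<sigma>2 x"

definition v1min :: "nat \<Rightarrow> bool list list \<Rightarrow> int" where
  "v1min n R = Min ((\<lambda>x. fst (omm n x)) ` set R)"

definition v1max :: "nat \<Rightarrow> bool list list \<Rightarrow> int" where
  "v1max n R = Max ((\<lambda>x. fst (omm n x)) ` set R)"

definition Vset :: "nat \<Rightarrow> bool list list \<Rightarrow> (int \<times> int) set" where
  "Vset n R = omm n ` set R"

definition Vin_plus :: "nat \<Rightarrow> bool list list \<Rightarrow> (int \<times> int) set" where
  "Vin_plus n R = {(v1, v2) \<in> Vset n R. \<exists>y \<in> set R. omm n y = (v1 + 1, v2 - 1)}"

definition Vin_minus :: "nat \<Rightarrow> bool list list \<Rightarrow> (int \<times> int) set" where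
  "Vin_minus n R = {(v1, v2) \<in> Vset n R. \<exists>y \<in> set R. omm n y = (v1 - 1, v2 + 1)}"

end

theory Submission
  imports Defs
begin

lemma sp_basic:
  assumes "sorted_perm g S \<sigma>"
  shows "\<And>p. p < length S \<Longrightarrow> \<exists>q<length S. \<sigma> q = p"
    and "\<And>a b. a < length S \<Longrightarrow> b < length S \<Longrightarrow> \<sigma> a = \<sigma> b \<Longrightarrow> a = b"
    and "\<And>a. a < length S \<Longrightarrow> \<sigma> a < length S"
    and "\<And>a b. a \<le> b \<Longrightarrow> b < length S \<Longrightarrow> g (S ! \<sigma> a) \<le> g (S ! \<sigma> b)"
proof -
  have bij: "bij_betw \<sigma> {..<length S} {..<length S}" using assms unfolding sorted_perm_def by auto
  show "\<And>p. p < length S \<Longrightarrow> \<exists>q<length S. \<sigma> q = p"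
    using bij unfolding bij_betw_def by (metis image_iff lessThan_iff)
  show "\<And>a b. a < length S \<Longrightarrow> b < length S \<Longrightarrow> \<sigma> a = \<sigma> b \<Longrightarrow> a = b"
    using bij unfolding bij_betw_def inj_on_def by auto
  show "\<And>a. a < length S \<Longrightarrow> \<sigma> a < length S"
    using bij unfolding bij_betw_def by auto
  show "\<And>a b. a \<le> b \<Longrightarrow> b < length S \<Longrightarrow> g (S ! \<sigma> a) \<le> g (S ! \<sigma> b)"
    using assms unfolding sorted_perm_def by auto
qed

lemma aux_num: "(a::int) \<le> v+1 \<Longrightarrow> v \<le> a \<Longrightarrow> v-1 \<le> b \<Longrightarrow> b \<le> v \<Longrightarrow>
   a - b = of_bool (v<a) + of_bool (b<v)"
  by (cases "v < a"; cases "b < v") auto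

lemma obj:
  assumes sp: "sorted_perm (\<lambda>x. real_of_int (h x)) S \<sigma>" and kL: "k < length S"
    and hk: "h (S!k) = v"
    and up: "\<exists>y\<in>set S. h y = v+1" and dn: "\<exists>y\<in>set S. h y = v - 1"
  shows "cdis_obj (\<lambda>x. real_of_int (h x)) S \<sigma> k =
    ereal ((of_bool (\<exists>j. Suc j < length S \<and> \<sigma> j = k \<and> v < h (S!\<sigma>(Suc j)))
          + of_bool (\<exists>j. 0<j \<and> j < length S \<and> \<sigma> j = k \<and> h (S!\<sigma>(j-1)) < v))
     / (real_of_int (h (S!\<sigma>(length S - 1))) - real_of_int (h (S!\<sigma> 0))))"
proof -
  let ?L = "length S"
  note B = sp_basic[OF sp]
  have mono: "\<And>a b. a \<le> b \<Longrightarrow> b < ?L \<Longrightarrow> h (S!\<sigma> a) \<le> h (S!\<sigma> b)"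
    using B(4) by simp
  obtain j0 where j0: "j0 < ?L" "\<sigma> j0 = k" using B(1) kL by blast
  obtain pu where pu: "pu < ?L" "h (S!\<sigma> pu) = v+1"
  proof -
    obtain y where "y \<in> set S" "h y = v+1" using up by blast
    then obtain p where "p < ?L" "S!p = y" by (auto simp: in_set_conv_nth)
    then obtain q where "q < ?L" "\<sigma> q = p" using B(1) by blast
    then show ?thesis using that \<open>S!p = y\<close> \<open>h y = v+1\<close> by blast
  qed
  obtain pd where pd: "pd < ?L" "h (S!\<sigma> pd) = v-1"
  proof -
    obtain y where "y \<in> set S" "h y = v-1" using dn by blast
    then obtain p where "p < ?L" "S!p = y" by (auto simp: in_set_conv_nth)
    then obtain q where "q < ?L" "\<sigma> q = p" using B(1) by blast
    then show ?thesis using that \<open>S!p = y\<close> \<open>h y = v-1\<close> by blast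
  qed
  have "j0 < pu"
  proof (rule ccontr)
    assume "\<not> j0 < pu" then have "h (S!\<sigma> pu) \<le> h (S!\<sigma> j0)" using mono[of pu j0] j0 by simp
    then show False using pu j0 hk by simp
  qed
  have "pd < j0"
  proof (rule ccontr)
    assume "\<not> pd < j0" then have "h (S!\<sigma> j0) \<le> h (S!\<sigma> pd)" using mono[of j0 pd] pd by simp
    then show False using pd j0 hk by simp
  qed
  have j0r: "0 < j0" "Suc j0 < ?L" using \<open>j0 < pu\<close> \<open>pd < j0\<close> pu by auto
  have u1: "h (S!\<sigma>(Suc j0)) \<le> v+1" using mono[of "Suc j0" pu] \<open>j0 < pu\<close> pu by simp
  have u2: "v \<le> h (S!\<sigma>(Suc j0))" using mono[of j0 "Suc j0"] j0r j0 hk by simp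
  have d1: "v - 1 \<le> h (S!\<sigma>(j0-1))" using mono[of pd "j0-1"] \<open>pd < j0\<close> pd j0 by simp
  have d2: "h (S!\<sigma>(j0-1)) \<le> v" using mono[of "j0-1" j0] j0 hk by simp
  have EA: "(\<exists>j. Suc j < ?L \<and> \<sigma> j = k \<and> v < h (S!\<sigma>(Suc j))) \<longleftrightarrow> v < h (S!\<sigma>(Suc j0))"
  proof
    assume "\<exists>j. Suc j < ?L \<and> \<sigma> j = k \<and> v < h (S!\<sigma>(Suc j))"
    then obtain j where "Suc j < ?L" "\<sigma> j = k" "v < h (S!\<sigma>(Suc j))" by blast
    moreover have "j = j0" using B(2)[of j j0] j0 \<open>Suc j < ?L\<close> \<open>\<sigma> j = k\<close> by simp
    ultimately show "v < h (S!\<sigma>(Suc j0))" by simp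
  next
    assume "v < h (S!\<sigma>(Suc j0))" then show "\<exists>j. Suc j < ?L \<and> \<sigma> j = k \<and> v < h (S!\<sigma>(Suc j))"
      using j0 j0r by (intro exI[of _ j0]) simp
  qed
  have EB: "(\<exists>j. 0<j \<and> j < ?L \<and> \<sigma> j = k \<and> h (S!\<sigma>(j-1)) < v) \<longleftrightarrow> h (S!\<sigma>(j0-1)) < v"
  proof
    assume "\<exists>j. 0<j \<and> j < ?L \<and> \<sigma> j = k \<and> h (S!\<sigma>(j-1)) < v"
    then obtain j where "j < ?L" "\<sigma> j = k" "h (S!\<sigma>(j-1)) < v" by blast
    moreover have "j = j0" using B(2)[of j j0] j0 \<open>j < ?L\<close> \<open>\<sigma> j = k\<close> by simp
    ultimately show "h (S!\<sigma>(j0-1)) < v" by simp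
  next
    assume "h (S!\<sigma>(j0-1)) < v" then show "\<exists>j. 0<j \<and> j < ?L \<and> \<sigma> j = k \<and> h (S!\<sigma>(j-1)) < v"
      using j0 j0r by (intro exI[of _ j0]) simp
  qed
  have ne: "\<sigma> 0 \<noteq> k" "\<sigma> (?L - 1) \<noteq> k"
  proof -
    show "\<sigma> 0 \<noteq> k"
    proof
      assume "\<sigma> 0 = k" moreover have "0 < ?L" using j0(1) by linarith
      ultimately have "0 = j0" using B(2)[of 0 j0] j0 by simp
      then show False using j0r by simp
    qed
    show "\<sigma> (?L - 1) \<noteq> k"
    proof
      assume "\<sigma> (?L - 1) = k" then have "?L - 1 = j0" using B(2)[of "?L - 1" j0] j0 by simp
      then show False using j0r by simp
    qed
  qed
  define F where "F j = (real_of_int (h (S!\<sigma>(Suc j))) - real_of_int (h (S!\<sigma>(j-1)))) /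
       (real_of_int (h (S!\<sigma>(?L - 1))) - real_of_int (h (S!\<sigma> 0)))" for j
  have "(\<Sum>j\<in>{1..<?L-1}. if \<sigma> j = k then F j else 0) = (\<Sum>j\<in>{1..<?L-1}. if j = j0 then F j else 0)"
  proof (rule sum.cong)
    fix j assume "j \<in> {1..<?L-1}"
    then have "j < ?L" by (simp, linarith)
    have "\<sigma> j = k \<longleftrightarrow> j = j0"
    proof
      assume "\<sigma> j = k" then show "j = j0" using B(2)[of j j0] j0 \<open>j < ?L\<close> by simp
    qed (use j0 in simp)
    then show "(if \<sigma> j = k then F j else 0) = (if j = j0 then F j else 0)" by simp
  qed simp
  also have "\<dots> = F j0" using j0r by (subst sum.delta) auto
  finally have S: "(\<Sum>j\<in>{1..<?L-1}. if \<sigma> j = k then F j else 0) = F j0" .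
  have num: "h (S!\<sigma>(Suc j0)) - h (S!\<sigma>(j0-1)) =
     of_bool (v < h (S!\<sigma>(Suc j0))) + of_bool (h (S!\<sigma>(j0-1)) < v)"
    using aux_num[OF u1 u2 d1 d2] .
  have numr: "real_of_int (h (S!\<sigma>(Suc j0))) - real_of_int (h (S!\<sigma>(j0-1))) =
     of_bool (v < h (S!\<sigma>(Suc j0))) + of_bool (h (S!\<sigma>(j0-1)) < v)"
    using arg_cong[OF num, of real_of_int] by simp
  have "cdis_obj (\<lambda>x. real_of_int (h x)) S \<sigma> k = ereal (\<Sum>j\<in>{1..<?L-1}. if \<sigma> j = k then F j else 0)"
    unfolding cdis_obj_def F_def using ne by simp
  also have "\<dots> = ereal (F j0)" using S by simp
  finally show ?thesis unfolding F_def EA EB numr .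
qed


lemma ends:
  assumes sp: "sorted_perm (\<lambda>x. real_of_int (h x)) S \<sigma>" and y: "y \<in> set S"
  shows "h (S!\<sigma> 0) \<le> h y" "h y \<le> h (S!\<sigma>(length S - 1))"
    "S!\<sigma> 0 \<in> set S" "S!\<sigma>(length S - 1) \<in> set S"
proof -
  note B = sp_basic[OF sp]
  obtain p where p: "p < length S" "S!p = y" using y by (auto simp: in_set_conv_nth)
  then obtain q where q: "q < length S" "\<sigma> q = p" using B(1) by blast
  have L: "0 < length S" using p(1) by linarith
  show "h (S!\<sigma> 0) \<le> h y" using B(4)[of 0 q] q p by simp
  show "h y \<le> h (S!\<sigma>(length S - 1))" using B(4)[of q "length S - 1"] q p L by simp
  show "S!\<sigma> 0 \<in> set S" using B(3)[of 0] L by simp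
  show "S!\<sigma>(length S - 1) \<in> set S" using B(3)[of "length S - 1"] L by simp
qed

lemma uniqA:
  assumes sp: "sorted_perm (\<lambda>x. real_of_int (h x)) S \<sigma>"
    and hk: "h (S!k) = v" and hk': "h (S!k') = v"
    and A: "\<exists>j. Suc j < length S \<and> \<sigma> j = k \<and> v < h (S!\<sigma>(Suc j))"
    and A': "\<exists>j. Suc j < length S \<and> \<sigma> j = k' \<and> v < h (S!\<sigma>(Suc j))"
  shows "k = k'"
proof -
  note B = sp_basic[OF sp]
  obtain j where j: "Suc j < length S" "\<sigma> j = k" "v < h (S!\<sigma>(Suc j))" using A by blast
  obtain j' where j': "Suc j' < length S" "\<sigma> j' = k'" "v < h (S!\<sigma>(Suc j'))" using A' by blast
  consider "j = j'" | "j < j'" | "j' < j" by linarith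
  then show ?thesis
  proof cases
    case 1 then show ?thesis using j j' by simp
  next
    case 2
    then have "h (S!\<sigma>(Suc j)) \<le> h (S!\<sigma> j')" using B(4)[of "Suc j" j'] j' by simp
    then show ?thesis using j j' hk' by simp
  next
    case 3
    then have "h (S!\<sigma>(Suc j')) \<le> h (S!\<sigma> j)" using B(4)[of "Suc j'" j] j by simp
    then show ?thesis using j j' hk by simp
  qed
qed

lemma uniqB:
  assumes sp: "sorted_perm (\<lambda>x. real_of_int (h x)) S \<sigma>"
    and hk: "h (S!k) = v" and hk': "h (S!k') = v"
    and A: "\<exists>j. 0<j \<and> j < length S \<and> \<sigma> j = k \<and> h (S!\<sigma>(j-1)) < v"
    and A': "\<exists>j. 0<j \<and> j < length S \<and> \<sigma> j = k' \<and> h (S!\<sigma>(j-1)) < v"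
  shows "k = k'"
proof -
  note B = sp_basic[OF sp]
  obtain j where j: "0<j" "j < length S" "\<sigma> j = k" "h (S!\<sigma>(j-1)) < v" using A by blast
  obtain j' where j': "0<j'" "j' < length S" "\<sigma> j' = k'" "h (S!\<sigma>(j'-1)) < v" using A' by blast
  consider "j = j'" | "j < j'" | "j' < j" by linarith
  then show ?thesis
  proof cases
    case 1 then show ?thesis using j j' by simp
  next
    case 2
    then have "h (S!\<sigma> j) \<le> h (S!\<sigma> (j'-1))" using B(4)[of j "j'-1"] j' by simp
    then show ?thesis using j j' hk by simp
  next
    case 3
    then have "h (S!\<sigma> j') \<le> h (S!\<sigma> (j-1))" using B(4)[of j' "j-1"] j by simp
    then show ?thesis using j j' hk' by simp
  qed
qed


theorem lemma4:
  fixes n N :: nat and P Q :: "bool list list" and \<sigma>1 \<sigma>2 :: "nat \<Rightarrow> nat"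
    and v1 v2 :: int
  assumes "length P = N" and "length Q = N"
    and "\<forall>x \<in> set (P @ Q). length x = n"
    and "sorted_perm (\<lambda>x. real_of_int (fst (omm n x))) (P @ Q) \<sigma>1"
    and "sorted_perm (\<lambda>x. real_of_int (snd (omm n x))) (P @ Q) \<sigma>2"
    and "v1max n (P @ Q) > v1min n (P @ Q)"
    and "(v1, v2) \<in> Vin_plus n (P @ Q) \<inter> Vin_minus n (P @ Q)"
  shows "card {k. k < length (P @ Q) \<and> omm n ((P @ Q) ! k) = (v1, v2) \<and>
           cDis (\<lambda>x. real_of_int (fst (omm n x))) (\<lambda>x. real_of_int (snd (omm n x)))
                (P @ Q) \<sigma>1 \<sigma>2 k
             \<ge> ereal (2 / real_of_int (v1max n (P @ Q) - v1min n (P @ Q)))} \<le> 2"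
proof -
  define S where "S = P @ Q"
  define L where "L = length S"
  define h1 where "h1 = (\<lambda>x. fst (omm n x))"
  define h2 where "h2 = (\<lambda>x. snd (omm n x))"
  have sp1: "sorted_perm (\<lambda>x. real_of_int (h1 x)) S \<sigma>1" using assms(4) unfolding S_def h1_def .
  have sp2: "sorted_perm (\<lambda>x. real_of_int (h2 x)) S \<sigma>2" using assms(5) unfolding S_def h2_def .
  have h12: "\<And>x. h2 x = int n - h1 x" unfolding h1_def h2_def omm_def by simp
  define D where "D = v1max n S - v1min n S"
  have Dpos: "D > 0" using assms(6) unfolding D_def S_def by simp
  have mn: "v1min n S = Min (h1 ` set S)" and mx: "v1max n S = Max (h1 ` set S)"
    unfolding v1min_def v1max_def h1_def by simp_all
  obtain yp where yp: "yp \<in> set S" "omm n yp = (v1 + 1, v2 - 1)"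
    using assms(7) unfolding Vin_plus_def S_def by auto
  obtain ym where ym: "ym \<in> set S" "omm n ym = (v1 - 1, v2 + 1)"
    using assms(7) unfolding Vin_minus_def S_def by auto
  have up1: "\<exists>y\<in>set S. h1 y = v1+1" using yp unfolding h1_def by (intro bexI[of _ yp]) auto
  have dn1: "\<exists>y\<in>set S. h1 y = v1-1" using ym unfolding h1_def by (intro bexI[of _ ym]) auto
  have up2: "\<exists>y\<in>set S. h2 y = v2+1" using ym unfolding h2_def by (intro bexI[of _ ym]) auto
  have dn2: "\<exists>y\<in>set S. h2 y = v2-1" using yp unfolding h2_def by (intro bexI[of _ yp]) auto
  have fin: "finite (h1 ` set S)" by simp
  have e1a: "h1 (S!\<sigma>1 0) = v1min n S" unfolding mn
    by (rule Min_eqI[symmetric]) (use ends[OF sp1] yp in auto)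
  have e1b: "h1 (S!\<sigma>1 (L - 1)) = v1max n S" unfolding mx L_def
    by (rule Max_eqI[symmetric]) (use ends[OF sp1] yp in auto)
  have e2a: "h1 (S!\<sigma>2 0) = v1max n S" unfolding mx
  proof (rule Max_eqI[symmetric])
    fix z assume "z \<in> h1 ` set S"
    then obtain y where "y \<in> set S" "z = h1 y" by blast
    then show "z \<le> h1 (S!\<sigma>2 0)" using ends(1)[OF sp2 \<open>y \<in> set S\<close>] h12 by simp
  qed (use ends(3)[OF sp2 yp(1)] in auto)
  have e2b: "h1 (S!\<sigma>2 (L-1)) = v1min n S" unfolding mn L_def
  proof (rule Min_eqI[symmetric])
    fix z assume "z \<in> h1 ` set S"
    then obtain y where "y \<in> set S" "z = h1 y" by blast
    then show "h1 (S!\<sigma>2 (length S - 1)) \<le> z" using ends(2)[OF sp2 \<open>y \<in> set S\<close>] h12 by simp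
  qed (use ends(4)[OF sp2 yp(1)] in auto)
  have D1: "real_of_int (h1 (S!\<sigma>1 (L - 1))) - real_of_int (h1 (S!\<sigma>1 0)) = real_of_int D"
    using e1a e1b unfolding D_def by simp
  have D2: "real_of_int (h2 (S!\<sigma>2 (L - 1))) - real_of_int (h2 (S!\<sigma>2 0)) = real_of_int D"
    using e2a e2b unfolding D_def h12 by simp
  define A1 where "A1 k = (\<exists>j. Suc j < L \<and> \<sigma>1 j = k \<and> v1 < h1 (S!\<sigma>1(Suc j)))" for k
  define B1 where "B1 k = (\<exists>j. 0<j \<and> j < L \<and> \<sigma>1 j = k \<and> h1 (S!\<sigma>1(j-1)) < v1)" for k
  define A2 where "A2 k = (\<exists>j. Suc j < L \<and> \<sigma>2 j = k \<and> v2 < h2 (S!\<sigma>2(Suc j)))" for k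
  define B2 where "B2 k = (\<exists>j. 0<j \<and> j < L \<and> \<sigma>2 j = k \<and> h2 (S!\<sigma>2(j-1)) < v2)" for k
  define cnt where "cnt k = (of_bool (A1 k) + of_bool (B1 k) + of_bool (A2 k) + of_bool (B2 k) :: nat)" for k
  define T where "T = {k. k < length (P @ Q) \<and> omm n ((P @ Q) ! k) = (v1, v2) \<and>
           cDis (\<lambda>x. real_of_int (fst (omm n x))) (\<lambda>x. real_of_int (snd (omm n x)))
                (P @ Q) \<sigma>1 \<sigma>2 k
             \<ge> ereal (2 / real_of_int (v1max n (P @ Q) - v1min n (P @ Q)))}"
  have Tk: "k < L" "h1 (S!k) = v1" "h2 (S!k) = v2" if "k \<in> T" for k
    using that unfolding T_def L_def S_def h1_def h2_def by auto
  have cnt2: "2 \<le> cnt k" if "k \<in> T" for k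
  proof -
    have c1: "cdis_obj (\<lambda>x. real_of_int (h1 x)) S \<sigma>1 k =
       ereal ((of_bool (A1 k) + of_bool (B1 k)) / real_of_int D)"
      using obj[OF sp1 Tk(1)[OF that, unfolded L_def] Tk(2)[OF that] up1 dn1] D1 unfolding A1_def B1_def L_def
      by simp
    have c2: "cdis_obj (\<lambda>x. real_of_int (h2 x)) S \<sigma>2 k =
       ereal ((of_bool (A2 k) + of_bool (B2 k)) / real_of_int D)"
      using obj[OF sp2 Tk(1)[OF that, unfolded L_def] Tk(3)[OF that] up2 dn2] D2 unfolding A2_def B2_def L_def
      by simp
    have "cDis (\<lambda>x. real_of_int (h1 x)) (\<lambda>x. real_of_int (h2 x)) S \<sigma>1 \<sigma>2 k \<ge> ereal (2 / real_of_int D)"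
      using that unfolding T_def h1_def h2_def S_def D_def by simp
    then have "ereal (2 / real_of_int D) \<le> ereal (real (cnt k) / real_of_int D)"
      unfolding cDis_def c1 c2 cnt_def by (simp add: add_divide_distrib)
    then have "2 / real_of_int D \<le> real (cnt k) / real_of_int D" by simp
    then have "2 \<le> real (cnt k)" using Dpos by (simp add: divide_le_cancel)
    then show ?thesis by simp
  qed
  have finT: "finite T" unfolding T_def by simp
  have one: "card (T \<inter> {k. X k}) \<le> 1" if "\<And>k k'. k \<in> T \<Longrightarrow> k' \<in> T \<Longrightarrow> X k \<Longrightarrow> X k' \<Longrightarrow> k = k'" for X
  proof -
    have "finite (T \<inter> {k. X k})" using finT by simp
    then have "card (T \<inter> {k. X k}) \<le> Suc 0" using that by (subst card_le_Suc0_iff_eq) auto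
    then show ?thesis by simp
  qed
  have o1: "card (T \<inter> {k. A1 k}) \<le> 1"
  proof (rule one)
    fix k k' assume "k \<in> T" "k' \<in> T" "A1 k" "A1 k'"
    then show "k = k'" using uniqA[OF sp1 Tk(2)[OF \<open>k \<in> T\<close>] Tk(2)[OF \<open>k' \<in> T\<close>]]
      unfolding A1_def L_def by blast
  qed
  have o2: "card (T \<inter> {k. B1 k}) \<le> 1"
  proof (rule one)
    fix k k' assume "k \<in> T" "k' \<in> T" "B1 k" "B1 k'"
    then show "k = k'" using uniqB[OF sp1 Tk(2)[OF \<open>k \<in> T\<close>] Tk(2)[OF \<open>k' \<in> T\<close>]]
      unfolding B1_def L_def by blast
  qed
  have o3: "card (T \<inter> {k. A2 k}) \<le> 1"
  proof (rule one)
    fix k k' assume "k \<in> T" "k' \<in> T" "A2 k" "A2 k'"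
    then show "k = k'" using uniqA[OF sp2 Tk(3)[OF \<open>k \<in> T\<close>] Tk(3)[OF \<open>k' \<in> T\<close>]]
      unfolding A2_def L_def by blast
  qed
  have o4: "card (T \<inter> {k. B2 k}) \<le> 1"
  proof (rule one)
    fix k k' assume "k \<in> T" "k' \<in> T" "B2 k" "B2 k'"
    then show "k = k'" using uniqB[OF sp2 Tk(3)[OF \<open>k \<in> T\<close>] Tk(3)[OF \<open>k' \<in> T\<close>]]
      unfolding B2_def L_def by blast
  qed
  have "2 * card T = (\<Sum>k\<in>T. 2)" by simp
  also have "\<dots> \<le> (\<Sum>k\<in>T. cnt k)" by (rule sum_mono) (use cnt2 in auto)
  also have "\<dots> = card (T \<inter> {k. A1 k}) + card (T \<inter> {k. B1 k}) + card (T \<inter> {k. A2 k}) + card (T \<inter> {k. B2 k})"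
    unfolding cnt_def sum.distrib using finT by (simp add: sum_of_bool_eq)
  also have "\<dots> \<le> 4" using o1 o2 o3 o4 by linarith
  finally have "card T \<le> 2" by linarith
  then show ?thesis unfolding T_def .
qed

end
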